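(* Let $G$ be a graph on $n\geq 3$ vertices and let $k$ be an integer with $2\leq k<n$. Suppose that every connected graph $H$ on $N$ vertices with $2\leq N\leq n$ satisfies the implication $\psi_{N-1}(H)=2\Rightarrow \psi_N(H)=1$. Then $\psi_k(G)=n-k+1$ implies $\psi_j(G)=n-j+1$ for all integers $j$ with $k<j\leq n$.
   Context: All graphs are finite, simple and nonempty. For a graph $G$ and a positive integer $k$, a $k$-path vertex cover ($k$-PVC) of $G$ is a set $S$ of vertices such that every path on $k$ vertices in $G$ contains at least one vertex of $S$ (if $G$ has no path on $k$ vertices, the empty set is a $k$-PVC). $\psi_k(G)$ denotes the minimum cardinality of a $k$-PVC of $G$. *)

theory Defs
  imports Main
begin

definition graph :: "'a set \<Rightarrow> ('a \<Rightarrow> 'a \<Rightarrow> bool) \<Rightarrow> bool" where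
  "graph V E \<longleftrightarrow> finite V \<and> V \<noteq> {} \<and>
     (\<forall>x y. E x y \<longrightarrow> x \<in> V \<and> y \<in> V) \<and>
     (\<forall>x y. E x y \<longrightarrow> E y x) \<and> (\<forall>x. \<not> E x x)"

definition connected_graph :: "'a set \<Rightarrow> ('a \<Rightarrow> 'a \<Rightarrow> bool) \<Rightarrow> bool" where
  "connected_graph V E \<longleftrightarrow> (\<forall>u\<in>V. \<forall>v\<in>V. E\<^sup>*\<^sup>* u v)"

definition is_path :: "'a set \<Rightarrow> ('a \<Rightarrow> 'a \<Rightarrow> bool) \<Rightarrow> nat \<Rightarrow> 'a list \<Rightarrow> bool" where
  "is_path V E k p \<longleftrightarrow> length p = k \<and> distinct p \<and> set p \<subseteq> V \<and>
     (\<forall>i. Suc i < length p \<longrightarrow> E (p ! i) (p ! Suc i))"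

definition is_kpvc :: "'a set \<Rightarrow> ('a \<Rightarrow> 'a \<Rightarrow> bool) \<Rightarrow> nat \<Rightarrow> 'a set \<Rightarrow> bool" where
  "is_kpvc V E k S \<longleftrightarrow> S \<subseteq> V \<and> (\<forall>p. is_path V E k p \<longrightarrow> set p \<inter> S \<noteq> {})"

definition psi :: "'a set \<Rightarrow> ('a \<Rightarrow> 'a \<Rightarrow> bool) \<Rightarrow> nat \<Rightarrow> nat" where
  "psi V E k = Min {card S | S. is_kpvc V E k S}"

end

theory Submission
  imports Defs
begin

lemma path_reach:
  assumes "is_path V E m p" "\<forall>x y. E x y \<longrightarrow> E y x"
  shows "\<forall>i. i + d < length p \<longrightarrow> E\<^sup>*\<^sup>* (p!i) (p!(i+d)) \<and> E\<^sup>*\<^sup>* (p!(i+d)) (p!i)"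
proof (induction d)
  case 0
  then show ?case by auto
next
  case (Suc d)
  show ?case
  proof (intro allI impI)
    fix i assume a: "i + Suc d < length p"
    then have e: "E (p!(i+d)) (p!Suc(i+d))" using assms(1) unfolding is_path_def by auto
    then have e2: "E (p!Suc(i+d)) (p!(i+d))" using assms(2) by blast
    have ih: "E\<^sup>*\<^sup>* (p!i) (p!(i+d)) \<and> E\<^sup>*\<^sup>* (p!(i+d)) (p!i)" using Suc a by auto
    show "E\<^sup>*\<^sup>* (p!i) (p!(i+Suc d)) \<and> E\<^sup>*\<^sup>* (p!(i+Suc d)) (p!i)"
      using ih e e2 by (auto intro: rtranclp.rtrancl_into_rtrancl converse_rtranclp_into_rtranclp)
  qed
qed

lemma path_reach2:
  assumes "is_path V E m p" "\<forall>x y. E x y \<longrightarrow> E y x" "i < length p" "i' < length p"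
  shows "E\<^sup>*\<^sup>* (p!i) (p!i')"
proof (cases "i \<le> i'")
  case True
  then obtain d where "i' = i + d" using le_Suc_ex by blast
  then show ?thesis using path_reach[OF assms(1,2), of d] assms by auto
next
  case False
  then obtain d where "i = i' + d" using le_Suc_ex[of i' i] by auto
  then show ?thesis using path_reach[OF assms(1,2), of d] assms by auto
qed

lemma psi_char:
  assumes g: "graph V E" and k: "1 \<le> k" "k \<le> card V"
  shows "psi V E k = card V - k + 1 \<longleftrightarrow>
     (\<forall>T\<subseteq>V. card T = k \<longrightarrow> (\<exists>p. is_path V E k p \<and> set p = T))"
proof -
  have fin: "finite V" using g unfolding graph_def by auto
  define C where "C = {card S | S. is_kpvc V E k S}"
  have Cfin: "finite C"
  proof -
    have "C \<subseteq> {0..card V}" unfolding C_def is_kpvc_def using fin card_mono by fastforce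
    then show ?thesis using finite_subset by blast
  qed
  have Vk: "is_kpvc V E k V"
    unfolding is_kpvc_def
  proof (intro conjI allI impI)
    fix p assume p: "is_path V E k p"
    then have "set p \<subseteq> V" "p \<noteq> []" using k unfolding is_path_def by auto
    then show "set p \<inter> V \<noteq> {}" by (simp add: Int_absorb2)
  qed simp
  have Cne: "C \<noteq> {}" using Vk unfolding C_def by auto
  have psiC: "psi V E k = Min C" unfolding psi_def C_def by simp
  have le1: "card V - k + 1 \<le> card V" using k by simp
  obtain S where S: "S \<subseteq> V" "card S = card V - k + 1"
    using obtain_subset_with_card_n[OF le1] by metis
  have Skp: "is_kpvc V E k S"
    unfolding is_kpvc_def
  proof (intro conjI allI impI)
    show "S \<subseteq> V" by fact
    fix p assume p: "is_path V E k p"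
    show "set p \<inter> S \<noteq> {}"
    proof
      assume d: "set p \<inter> S = {}"
      have "set p \<subseteq> V - S" using p d unfolding is_path_def by auto
      then have "card (set p) \<le> card (V - S)" using fin card_mono by blast
      also have "\<dots> = k - 1" using S fin k by (simp add: card_Diff_subset finite_subset)
      finally show False using p k unfolding is_path_def by (simp add: distinct_card)
    qed
  qed
  have up: "psi V E k \<le> card V - k + 1"
    using Skp S psiC Cfin unfolding C_def by (metis (mono_tags, lifting) Min_le mem_Collect_eq)
  show ?thesis
  proof
    assume eq: "psi V E k = card V - k + 1"
    show "\<forall>T\<subseteq>V. card T = k \<longrightarrow> (\<exists>p. is_path V E k p \<and> set p = T)"
    proof (intro allI impI, rule ccontr)
      fix T assume T: "T \<subseteq> V" "card T = k" and n: "\<not> (\<exists>p. is_path V E k p \<and> set p = T)"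
      have kp: "is_kpvc V E k (V - T)"
        unfolding is_kpvc_def
      proof (intro conjI allI impI)
        show "V - T \<subseteq> V" by auto
        fix p assume p: "is_path V E k p"
        show "set p \<inter> (V - T) \<noteq> {}"
        proof
          assume "set p \<inter> (V - T) = {}"
          then have sub: "set p \<subseteq> T" using p unfolding is_path_def by auto
          have "card (set p) = k" using p unfolding is_path_def by (simp add: distinct_card)
          then have "set p = T" using sub T fin by (metis card_subset_eq finite_subset)
          then show False using n p by blast
        qed
      qed
      have "card (V - T) = card V - k" using T fin by (simp add: card_Diff_subset finite_subset)
      then have "psi V E k \<le> card V - k"
        using kp psiC Cfin unfolding C_def by (metis (mono_tags, lifting) Min_le mem_Collect_eq)
      then show False using eq by simp
    qed
  next
    assume tr: "\<forall>T\<subseteq>V. card T = k \<longrightarrow> (\<exists>p. is_path V E k p \<and> set p = T)"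
    have "\<forall>c\<in>C. card V - k + 1 \<le> c"
    proof
      fix c assume "c \<in> C"
      then obtain S' where S': "c = card S'" "is_kpvc V E k S'" unfolding C_def by auto
      show "card V - k + 1 \<le> c"
      proof (rule ccontr)
        assume "\<not> card V - k + 1 \<le> c"
        have sv: "S' \<subseteq> V" using S' unfolding is_kpvc_def by auto
        then have "card (V - S') = card V - card S'" using fin by (simp add: card_Diff_subset finite_subset)
        moreover have "card S' < card V - k + 1" using \<open>\<not> card V - k + 1 \<le> c\<close> S'(1) by simp
        ultimately have "k \<le> card (V - S')" using k by linarith
        then obtain T where T: "T \<subseteq> V - S'" "card T = k" using obtain_subset_with_card_n by metis
        then obtain p where "is_path V E k p" "set p = T" using tr by blast
        then show False using S' T unfolding is_kpvc_def by auto
      qed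
    qed
    then have "card V - k + 1 \<le> Min C" using Cfin Cne by simp
    then show "psi V E k = card V - k + 1" using up psiC by simp
  qed
qed

lemma connected_lemma:
  assumes g: "graph W F" and c: "3 \<le> card W"
    and tr: "\<forall>U\<subseteq>W. card U = card W - 1 \<longrightarrow> (\<exists>p. is_path W F (card W - 1) p \<and> set p = U)"
  shows "connected_graph W F"
  unfolding connected_graph_def
proof (intro ballI)
  fix u v assume uv: "u \<in> W" "v \<in> W"
  have fin: "finite W" using g unfolding graph_def by auto
  have sym: "\<forall>x y. F x y \<longrightarrow> F y x" using g unfolding graph_def by auto
  show "F\<^sup>*\<^sup>* u v"
  proof (cases "u = v")
    case True then show ?thesis by simp
  next
    case False
    have "card (W - {u, v}) = card W - 2" using uv False fin by (simp add: card_Diff_subset)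
    then have "0 < card (W - {u,v})" using c by simp
    then have "W - {u,v} \<noteq> {}" by (auto simp: card_gt_0_iff)
    then obtain w where w: "w \<in> W" "w \<noteq> u" "w \<noteq> v" by blast
    have "card (W - {w}) = card W - 1" using w fin by simp
    then obtain p where p: "is_path W F (card W - 1) p" "set p = W - {w}" using tr by blast
    have "u \<in> set p" "v \<in> set p" using p w uv by auto
    then obtain i i' where "i < length p" "p!i = u" "i' < length p" "p!i' = v"
      by (metis in_set_conv_nth)
    then show ?thesis using path_reach2[OF p(1) sym] by metis
  qed
qed

theorem mainTheorem10:
  fixes V :: "'a set" and E :: "'a \<Rightarrow> 'a \<Rightarrow> bool" and n k :: nat
  assumes "graph V E" and "card V = n" and "n \<ge> 3"
    and "2 \<le> k" and "k < n"
    and hyp: "\<forall>(W :: nat set) (F :: nat \<Rightarrow> nat \<Rightarrow> bool) N.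
                graph W F \<and> connected_graph W F \<and> card W = N \<and> 2 \<le> N \<and> N \<le> n
                \<and> psi W F (N - 1) = 2 \<longrightarrow> psi W F N = 1"
    and "psi V E k = n - k + 1"
  shows "\<forall>j. k < j \<and> j \<le> n \<longrightarrow> psi V E j = n - j + 1"
proof -
  have gV: "graph V E" by fact
  have finV: "finite V" using gV unfolding graph_def by auto
  let ?tr = "\<lambda>j. \<forall>T\<subseteq>V. card T = j \<longrightarrow> (\<exists>p. is_path V E j p \<and> set p = T)"
  have trk: "?tr k" using psi_char[OF gV, of k] assms(2,4,5,7) by simp
  have step: "?tr (Suc j)" if j: "2 \<le> j" "j < n" and IH: "?tr j" for j
  proof (intro allI impI)
    fix T assume T: "T \<subseteq> V" "card T = Suc j"
    have finT: "finite T" using T finV finite_subset by blast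
    define W where "W = {0..<Suc j}"
    obtain g where gb: "bij_betw g W T"
      using finite_same_card_bij[of W T] finT T unfolding W_def by auto
    have inj: "inj_on g W" and img: "g ` W = T" using gb unfolding bij_betw_def by auto
    define F where "F = (\<lambda>x y. x \<in> W \<and> y \<in> W \<and> E (g x) (g y))"
    have cW: "card W = Suc j" unfolding W_def by simp
    have gE: "\<forall>x y. E x y \<longrightarrow> x \<in> V \<and> y \<in> V" "\<forall>x y. E x y \<longrightarrow> E y x" "\<forall>x. \<not> E x x"
      using gV unfolding graph_def by auto
    have gW: "graph W F" unfolding graph_def F_def W_def using gE by auto
    have forth: "\<exists>p. is_path W F m p \<and> set p = U"
      if U: "U \<subseteq> W" and q: "is_path V E m q" "set q = g ` U" for U m q
    proof -
      define h where "h = inv_into W g"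
      have qT: "set q \<subseteq> T" using q U img by auto
      have hT: "\<And>y. y \<in> T \<Longrightarrow> h y \<in> W \<and> g (h y) = y"
        unfolding h_def using img by (auto intro: inv_into_into f_inv_into_f)
      have injh: "inj_on h T" unfolding h_def using img by (simp add: inj_on_inv_into)
      have "is_path W F m (map h q)"
        unfolding is_path_def
      proof (intro conjI allI impI)
        show "length (map h q) = m" using q unfolding is_path_def by simp
        show "distinct (map h q)" using q qT injh unfolding is_path_def
          by (simp add: distinct_map inj_on_subset)
        show "set (map h q) \<subseteq> W" using qT hT by auto
        fix i assume i: "Suc i < length (map h q)"
        then have "E (q!i) (q!Suc i)" using q unfolding is_path_def by auto
        moreover have "q!i \<in> T" "q!Suc i \<in> T" using i qT by auto
        ultimately show "F (map h q ! i) (map h q ! Suc i)"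
          using i hT unfolding F_def by auto
      qed
      moreover have "set (map h q) = U"
      proof -
        have "set (map h q) = h ` g ` U" using q by simp
        also have "\<dots> = U" unfolding h_def
          by (rule inv_into_image_cancel[OF inj U])
        finally show ?thesis .
      qed
      ultimately show ?thesis by blast
    qed
    have backtr: "is_path V E m (map g p) \<and> set (map g p) = g ` set p"
      if p: "is_path W F m p" for m p
    proof -
      have "is_path V E m (map g p)" unfolding is_path_def
      proof (intro conjI allI impI)
        show "length (map g p) = m" using p unfolding is_path_def by simp
        show "distinct (map g p)" using p inj unfolding is_path_def
          by (simp add: distinct_map inj_on_subset)
        show "set (map g p) \<subseteq> V" using p img T unfolding is_path_def by auto
        fix i assume i: "Suc i < length (map g p)"
        then have "F (p!i) (p!Suc i)" using p unfolding is_path_def by auto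
        then show "E (map g p ! i) (map g p ! Suc i)" using i unfolding F_def by auto
      qed
      then show ?thesis by simp
    qed
    have trW: "\<forall>U\<subseteq>W. card U = j \<longrightarrow> (\<exists>p. is_path W F j p \<and> set p = U)"
    proof (intro allI impI)
      fix U assume U: "U \<subseteq> W" "card U = j"
      have a: "g ` U \<subseteq> V" using U img T by auto
      have b: "card (g ` U) = j" using U inj by (simp add: card_image inj_on_subset)
      from IH[rule_format, OF a b] obtain q where q: "is_path V E j q" "set q = g ` U" by blast
      show "\<exists>p. is_path W F j p \<and> set p = U" using forth[OF U(1) q(1) q(2)] .
    qed
    have psiW: "psi W F j = 2" using psi_char[OF gW, of j] trW cW j by simp
    have conW: "connected_graph W F"
      using connected_lemma[OF gW] trW cW j by simp
    have pre: "graph W F \<and> connected_graph W F \<and> card W = Suc j \<and> 2 \<le> Suc j \<and> Suc j \<le> n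
                \<and> psi W F (Suc j - 1) = 2" using gW conW cW j psiW by simp
    have "psi W F (Suc j) = 1"
      using hyp[THEN spec, THEN spec, THEN spec, THEN mp, OF pre] .
    then have "\<forall>U\<subseteq>W. card U = Suc j \<longrightarrow> (\<exists>p. is_path W F (Suc j) p \<and> set p = U)"
      using psi_char[OF gW, of "Suc j"] cW by simp
    then obtain p where "is_path W F (Suc j) p" "set p = W" using cW by auto
    then have "is_path V E (Suc j) (map g p) \<and> set (map g p) = T" using backtr[of "Suc j" p] img by simp
    then show "\<exists>p. is_path V E (Suc j) p \<and> set p = T" by blast
  qed
  have all: "?tr (k + d)" if "k + d \<le> n" for d
    using that
  proof (induction d)
    case 0 then show ?case using trk by simp
  next
    case (Suc d)
    then have "?tr (k + d)" by simp
    then show ?case using step[of "k + d"] Suc.prems assms(4) by simp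
  qed
  show ?thesis
  proof (intro allI impI)
    fix j assume j: "k < j \<and> j \<le> n"
    then obtain d where "j = k + d" using le_Suc_ex less_imp_le by blast
    then have "?tr j" using all j by simp
    then show "psi V E j = n - j + 1" using psi_char[OF gV, of j] j assms(2,4) by simp
  qed
qed

end
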